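(* Let $E$ be a row-finite graph and $k$ a field. Let $K:\mathbb Z^R\to\mathbb Z^R\oplus\mathbb Z^S$ be $K(x)=((B_E^t-I)x,\,C_E^tx)$ and let $\psi:\mathbb Z^R\oplus\mathbb Z^S=\mathbb Z^{E^0}\to K_0^{\mathrm{gr}}(L_k(E))$ be $\psi(\sum_v n_v\mathbf e_v)=\sum_v n_v v(0)$. Then $\phi\circ\psi|_{\mathbb Z^R}=\psi\circ K$, the restriction of $\psi$ is an isomorphism from $\operatorname{Ker}K$ onto $\operatorname{Ker}\phi$, and $\psi$ induces an isomorphism $\overline\psi:\operatorname{Coker}K\to\operatorname{Coker}\phi$, where $\phi:K_0^{\mathrm{gr}}(L_k(E))\to K_0^{\mathrm{gr}}(L_k(E))$ is the homomorphism with $\phi(v(i))=v(i+1)-v(i)$.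
   Context: $E=(E^0,E^1,r,s)$ is a row-finite directed graph (each vertex emits finitely many edges); $S$ is its set of sinks and $R=E^0\setminus S$. The adjacency matrix $A_E$ has $A_E(v,w)=|\{e:s(e)=v,r(e)=w\}|$; listing $R$ before $S$, $A_E=\begin{pmatrix}B_E&C_E\\0&0\end{pmatrix}$ with $B_E$ the $R\times R$ and $C_E$ the $R\times S$ block. For a set $X$, $\mathbb Z^X$ denotes the direct sum $\bigoplus_X\mathbb Z$ with basis $\mathbf e_v$. $L_k(E)$ is the Leavitt path algebra (generated by $E^0\cup E^1\cup\{e^*\}$ with relations $vw=\delta_{v,w}v$, $s(e)e=e=er(e)$, $r(e)e^*=e^*=e^*s(e)$, $e^*f=\delta_{e,f}r(e)$, $v=\sum_{s(e)=v}ee^*$ for non-sinks), $\mathbb Z$-graded by $\deg e=1,\deg e^*=-1$. $K_0^{\mathrm{gr}}(L_k(E))$ is identified with the group completion of the monoid generated by $v(i)$ ($v\in E^0$, $i\in\mathbb Z$) with relations $v(i)=\sum_{e\in s^{-1}(v)}r(e)(i-1)$ for non-sinks $v$, where $v(i)$ corresponds to the class of the graded module $L_k(E)v(-i)$. *)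

theory Defs
  imports "HOL-Algebra.Algebra"
begin

definition graph :: "'v set \<Rightarrow> 'e set \<Rightarrow> ('e \<Rightarrow> 'v) \<Rightarrow> ('e \<Rightarrow> 'v) \<Rightarrow> bool" where
  "graph V Ed r s \<longleftrightarrow> (\<forall>e\<in>Ed. s e \<in> V \<and> r e \<in> V)"

definition row_finite :: "'v set \<Rightarrow> 'e set \<Rightarrow> ('e \<Rightarrow> 'v) \<Rightarrow> bool" where
  "row_finite V Ed s \<longleftrightarrow> (\<forall>v\<in>V. finite {e\<in>Ed. s e = v})"

definition regV :: "'v set \<Rightarrow> 'e set \<Rightarrow> ('e \<Rightarrow> 'v) \<Rightarrow> 'v set" where
  "regV V Ed s = {v\<in>V. \<exists>e\<in>Ed. s e = v}"

definition sinks :: "'v set \<Rightarrow> 'e set \<Rightarrow> ('e \<Rightarrow> 'v) \<Rightarrow> 'v set" where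
  "sinks V Ed s = V - regV V Ed s"

definition adj :: "'e set \<Rightarrow> ('e \<Rightarrow> 'v) \<Rightarrow> ('e \<Rightarrow> 'v) \<Rightarrow> 'v \<Rightarrow> 'v \<Rightarrow> int" where
  "adj Ed r s v w = int (card {e\<in>Ed. s e = v \<and> r e = w})"

(* Z^X is free_Abelian_group X (finitely supported integer functions on X).
   K : Z^R -> Z^R (+) Z^S = Z^{E^0},  K x = ((B^t - I) x, C^t x) *)
definition Kmap :: "'v set \<Rightarrow> 'e set \<Rightarrow> ('e \<Rightarrow> 'v) \<Rightarrow> ('e \<Rightarrow> 'v) \<Rightarrow> ('v \<Rightarrow>\<^sub>0 int) \<Rightarrow> ('v \<Rightarrow>\<^sub>0 int)" where
  "Kmap V Ed r s x = Abs_poly_mapping (\<lambda>w.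
     if w \<in> regV V Ed s then
       (\<Sum>v\<in>Poly_Mapping.keys x. adj Ed r s v w * Poly_Mapping.lookup x v) - Poly_Mapping.lookup x w
     else if w \<in> sinks V Ed s then
       (\<Sum>v\<in>Poly_Mapping.keys x. adj Ed r s v w * Poly_Mapping.lookup x v)
     else 0)"

definition FG :: "'v set \<Rightarrow> ('v \<times> int \<Rightarrow>\<^sub>0 int) monoid" where
  "FG V = free_Abelian_group (V \<times> UNIV)"

definition relsub :: "'v set \<Rightarrow> 'e set \<Rightarrow> ('e \<Rightarrow> 'v) \<Rightarrow> ('e \<Rightarrow> 'v) \<Rightarrow> ('v \<times> int \<Rightarrow>\<^sub>0 int) set" where
  "relsub V Ed r s = generate (FG V)
     {Poly_Mapping.single (v, i) 1 - (\<Sum>e\<in>{e\<in>Ed. s e = v}. Poly_Mapping.single (r e, i - 1) 1)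
        | v i. v \<in> regV V Ed s}"

(* K_0^gr(L_k(E)): group completion of the monoid presented by generators v(i) and
   the relations above, i.e. the abelian group with that presentation *)
definition K0gr :: "'v set \<Rightarrow> 'e set \<Rightarrow> ('e \<Rightarrow> 'v) \<Rightarrow> ('e \<Rightarrow> 'v) \<Rightarrow> ('v \<times> int \<Rightarrow>\<^sub>0 int) set monoid" where
  "K0gr V Ed r s = FG V Mod relsub V Ed r s"

definition cls :: "'v set \<Rightarrow> 'e set \<Rightarrow> ('e \<Rightarrow> 'v) \<Rightarrow> ('e \<Rightarrow> 'v) \<Rightarrow> 'v \<Rightarrow> int \<Rightarrow> ('v \<times> int \<Rightarrow>\<^sub>0 int) set" where
  "cls V Ed r s v i = relsub V Ed r s #>\<^bsub>FG V\<^esub> Poly_Mapping.single (v, i) 1"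

definition psi :: "'v set \<Rightarrow> 'e set \<Rightarrow> ('e \<Rightarrow> 'v) \<Rightarrow> ('e \<Rightarrow> 'v) \<Rightarrow> ('v \<Rightarrow>\<^sub>0 int) \<Rightarrow> ('v \<times> int \<Rightarrow>\<^sub>0 int) set" where
  "psi V Ed r s x = relsub V Ed r s #>\<^bsub>FG V\<^esub>
      (\<Sum>v\<in>Poly_Mapping.keys x. Poly_Mapping.single (v, 0) (Poly_Mapping.lookup x v))"

end

theory Submission
  imports Defs
begin

lemma lookup_frag_extend:
  "Poly_Mapping.lookup (frag_extend f c) k =
     (\<Sum>i\<in>Poly_Mapping.keys c. Poly_Mapping.lookup c i * Poly_Mapping.lookup (f i) k)"
  by (simp add: frag_extend_def lookup_sum)

lemma frag_extend_frag_extend: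
  "frag_extend f (frag_extend g c) = frag_extend (\<lambda>x. frag_extend f (g x)) c"
proof -
  have "Poly_Mapping.keys c \<subseteq> UNIV" by simp
  then show ?thesis
    by (induction c rule: frag_induction) (auto simp: frag_extend_diff)
qed

lemma frag_cmul_frag_of: "frag_cmul c (frag_of a) = Poly_Mapping.single a c"
  by (rule poly_mapping_eqI) (simp add: lookup_single)

lemma frag_extend_fun_add:
  "frag_extend (\<lambda>x. f x + g x) c = frag_extend f c + frag_extend g c"
  by (simp add: frag_extend_def frag_cmul_distrib2 sum.distrib)

lemma frag_extend_fun_diff:
  "frag_extend (\<lambda>x. f x - g x) c = frag_extend f c - frag_extend g c"
  by (simp add: frag_extend_def frag_cmul_distrib2 sum_subtractf frag_cmul_diff_distrib
      poly_mapping_eqI lookup_minus lookup_sum right_diff_distrib)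

definition shiftT :: "('v \<times> int \<Rightarrow>\<^sub>0 int) \<Rightarrow> ('v \<times> int \<Rightarrow>\<^sub>0 int)" where
  "shiftT = frag_extend (\<lambda>k. frag_of (fst k, snd k + 1))"
definition lev :: "int \<Rightarrow> ('v \<Rightarrow>\<^sub>0 int) \<Rightarrow> ('v \<times> int \<Rightarrow>\<^sub>0 int)" where
  "lev j = frag_extend (\<lambda>v. frag_of (v, j))"
definition aug :: "('v \<times> int \<Rightarrow>\<^sub>0 int) \<Rightarrow> ('v \<Rightarrow>\<^sub>0 int)" where
  "aug = frag_extend (\<lambda>k. frag_of (fst k))"

lemma lookup_shiftT: "Poly_Mapping.lookup (shiftT z) (v, j) = Poly_Mapping.lookup z (v, j - 1)"
proof -
  have "Poly_Mapping.lookup (shiftT z) (v, j) =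
     (\<Sum>i\<in>Poly_Mapping.keys z. if i = (v, j - 1) then Poly_Mapping.lookup z i else 0)"
    unfolding shiftT_def lookup_frag_extend
    by (rule sum.cong) (auto simp: lookup_single)
  also have "\<dots> = Poly_Mapping.lookup z (v, j - 1)"
    by (simp add: sum.delta' in_keys_iff)
  finally show ?thesis .
qed

lemma shiftT_fix: assumes "shiftT z = z" shows "z = 0"
proof (rule ccontr)
  assume nz: "z \<noteq> 0"
  then have ne: "Poly_Mapping.keys z \<noteq> {}" by simp
  define j where "j = Max (snd ` Poly_Mapping.keys z)"
  have "j \<in> snd ` Poly_Mapping.keys z" unfolding j_def using ne by (intro Max_in) auto
  then obtain v where vk: "(v, j) \<in> Poly_Mapping.keys z" by force
  have "Poly_Mapping.lookup z (v, j + 1) = Poly_Mapping.lookup (shiftT z) (v, j + 1)" using assms by simp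
  also have "\<dots> = Poly_Mapping.lookup z (v, j)" by (simp add: lookup_shiftT)
  finally have "(v, j + 1) \<in> Poly_Mapping.keys z" using vk by (simp add: in_keys_iff)
  then have "j + 1 \<le> j" unfolding j_def by (metis Max_ge finite_imageI finite_keys image_eqI snd_conv)
  then show False by simp
qed

lemma shiftT_of [simp]: "shiftT (frag_of (v, i)) = frag_of (v, i + 1)"
  by (simp add: shiftT_def)
lemma shiftT_diff: "shiftT (a - b) = shiftT a - shiftT b"
  by (simp add: shiftT_def frag_extend_diff)
lemma shiftT_add: "shiftT (a + b) = shiftT a + shiftT b"
  by (simp add: shiftT_def frag_extend_add)
lemma shiftT_0 [simp]: "shiftT 0 = 0"
  by (simp add: shiftT_def)
lemma lev_of [simp]: "lev j (frag_of v) = frag_of (v, j)"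
  by (simp add: lev_def)
lemma aug_of [simp]: "aug (frag_of (v, i)) = frag_of v"
  by (simp add: aug_def)

lemma keys_shiftT: "Poly_Mapping.keys y \<subseteq> W \<times> UNIV \<Longrightarrow> Poly_Mapping.keys (shiftT y) \<subseteq> W \<times> UNIV"
  unfolding shiftT_def using keys_frag_extend by fastforce
lemma keys_lev: "Poly_Mapping.keys x \<subseteq> W \<Longrightarrow> Poly_Mapping.keys (lev j x) \<subseteq> W \<times> UNIV"
  unfolding lev_def using keys_frag_extend by fastforce
lemma keys_aug: "Poly_Mapping.keys y \<subseteq> W \<times> UNIV \<Longrightarrow> Poly_Mapping.keys (aug y) \<subseteq> W"
  unfolding aug_def using keys_frag_extend by fastforce

lemma aug_shiftT: "aug (shiftT y) = aug y"
  by (simp add: aug_def shiftT_def frag_extend_frag_extend)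
lemma aug_lev: "aug (lev j x) = x"
  by (simp add: aug_def lev_def frag_extend_frag_extend flip: frag_expansion)
lemma shiftT_lev: "shiftT (lev j x) = lev (j + 1) x"
  by (simp add: lev_def shiftT_def frag_extend_frag_extend)

lemma shiftT_antider:
  assumes "Poly_Mapping.keys h \<subseteq> W \<times> UNIV"
  shows "\<exists>q. Poly_Mapping.keys q \<subseteq> W \<times> UNIV \<and> shiftT q - q = h - lev 0 (aug h)"
  using assms
proof (induction h rule: free_Abelian_group_induct[consumes 1])
  show "\<exists>q. Poly_Mapping.keys q \<subseteq> W \<times> UNIV \<and> shiftT q - q = 0 - lev 0 (aug 0)"
    by (intro exI[of _ 0]) (simp add: aug_def lev_def)
next
  fix x y
  assume "Poly_Mapping.keys x \<subseteq> W \<times> UNIV" "Poly_Mapping.keys y \<subseteq> W \<times> UNIV"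
    "\<exists>q. Poly_Mapping.keys q \<subseteq> W \<times> UNIV \<and> shiftT q - q = x - lev 0 (aug x)"
    "\<exists>q. Poly_Mapping.keys q \<subseteq> W \<times> UNIV \<and> shiftT q - q = y - lev 0 (aug y)"
  then obtain q1 q2 where "Poly_Mapping.keys q1 \<subseteq> W \<times> UNIV" "shiftT q1 - q1 = x - lev 0 (aug x)"
     "Poly_Mapping.keys q2 \<subseteq> W \<times> UNIV" "shiftT q2 - q2 = y - lev 0 (aug y)" by blast
  note qs = this
  have "shiftT (q1 - q2) - (q1 - q2) = (shiftT q1 - q1) - (shiftT q2 - q2)" by (simp add: shiftT_diff)
  also have "\<dots> = (x - lev 0 (aug x)) - (y - lev 0 (aug y))" using qs by simp
  also have "\<dots> = (x - y) - lev 0 (aug (x - y))" by (simp add: aug_def lev_def frag_extend_diff)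
  finally show "\<exists>q. Poly_Mapping.keys q \<subseteq> W \<times> UNIV \<and> shiftT q - q = (x - y) - lev 0 (aug (x - y))"
    using qs by (intro exI[of _ "q1 - q2"]) (auto dest!: subsetD[OF keys_diff])
next
  fix a assume "a \<in> W \<times> (UNIV :: int set)"
  then obtain v i where a: "a = (v, i)" and v: "v \<in> W" by auto
  have "\<exists>q. Poly_Mapping.keys q \<subseteq> W \<times> UNIV \<and> shiftT q - q = frag_of (v, i) - frag_of (v, 0)"
  proof (induction i rule: int_induct[where k=0])
    case base
    then show ?case by (intro exI[of _ 0]) simp
  next
    case (step1 i)
    then obtain q where q: "Poly_Mapping.keys q \<subseteq> W \<times> UNIV" "shiftT q - q = frag_of (v, i) - frag_of (v, 0)"
      by blast
    show ?case
      using q v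
      by (intro exI[of _ "q + frag_of (v, i)"])
         (auto simp: shiftT_add algebra_simps dest!: subsetD[OF keys_add])
  next
    case (step2 i)
    then obtain q where q: "Poly_Mapping.keys q \<subseteq> W \<times> UNIV" "shiftT q - q = frag_of (v, i) - frag_of (v, 0)"
      by blast
    show ?case
      using q v
      by (intro exI[of _ "q - frag_of (v, i - 1)"])
         (auto simp: shiftT_diff algebra_simps dest!: subsetD[OF keys_diff])
  qed
  then show "\<exists>q. Poly_Mapping.keys q \<subseteq> W \<times> UNIV \<and> shiftT q - q = frag_of a - lev 0 (aug (frag_of a))"
    by (simp add: a)
qed

lemma frag_extend_zero_fun: "frag_extend (\<lambda>x. 0) c = 0"
  by (rule frag_extend_eq_0) simp

lemma frag_extend_sum_gen [simp]:
  "frag_extend f (sum g I) = (\<Sum>i\<in>I. frag_extend f (g i))"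
  by (induction I rule: infinite_finite_induct) (simp_all add: frag_extend_add)

locale gctx =
  fixes V :: "'v set" and Ed :: "'e set" and r s :: "'e \<Rightarrow> 'v"
  assumes gr: "graph V Ed r s" and rf: "row_finite V Ed s"
begin

abbreviation "R \<equiv> regV V Ed s"

definition outs :: "'v \<Rightarrow> ('v \<Rightarrow>\<^sub>0 int)" where
  "outs v = (\<Sum>e\<in>{e\<in>Ed. s e = v}. frag_of (r e))"
definition Dgen :: "'v \<times> int \<Rightarrow> ('v \<times> int \<Rightarrow>\<^sub>0 int)" where
  "Dgen k = frag_of k - (\<Sum>e\<in>{e\<in>Ed. s e = fst k}. frag_of (r e, snd k - 1))"
definition "Dmap = frag_extend Dgen"
definition "Amap = frag_extend outs"
definition "Kp = frag_extend (\<lambda>v. outs v - frag_of v)"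

lemma R_sub: "R \<subseteq> V" by (auto simp: regV_def)

lemma rV: "e \<in> Ed \<Longrightarrow> r e \<in> V" using gr by (auto simp: graph_def)

lemma keys_outs: "Poly_Mapping.keys (outs v) \<subseteq> V"
  unfolding outs_def using keys_sum rV by fastforce

lemma keys_Dgen: "Poly_Mapping.keys (Dgen k) \<subseteq> insert k (V \<times> UNIV)"
proof -
  have "Poly_Mapping.keys (\<Sum>e\<in>{e\<in>Ed. s e = fst k}. frag_of (r e, snd k - 1)) \<subseteq> V \<times> UNIV"
    using keys_sum[of "\<lambda>e. frag_of (r e, snd k - 1)"] rV by fastforce
  then show ?thesis unfolding Dgen_def using keys_diff by fastforce
qed

lemma keys_Dmap: "Poly_Mapping.keys g \<subseteq> V \<times> UNIV \<Longrightarrow> Poly_Mapping.keys (Dmap g) \<subseteq> V \<times> UNIV"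
  unfolding Dmap_def using keys_frag_extend[of Dgen g] keys_Dgen by fastforce

lemma keys_Kp: "Poly_Mapping.keys x \<subseteq> V \<Longrightarrow> Poly_Mapping.keys (Kp x) \<subseteq> V"
proof -
  have "Poly_Mapping.keys (outs v - frag_of v) \<subseteq> insert v V" for v
    using keys_diff[of "outs v" "frag_of v"] keys_outs by auto
  then show "Poly_Mapping.keys x \<subseteq> V \<Longrightarrow> ?thesis"
    unfolding Kp_def using keys_frag_extend[of "\<lambda>v. outs v - frag_of v" x] by fastforce
qed

lemma Kp_eq: "Kp x = Amap x - x"
  unfolding Kp_def Amap_def frag_extend_fun_diff by (simp flip: frag_expansion)

lemma Kp_diff: "Kp (a - b) = Kp a - Kp b"
  by (simp add: Kp_def frag_extend_diff)
lemma Kp_add: "Kp (a + b) = Kp a + Kp b"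
  by (simp add: Kp_def frag_extend_add)
lemma Dmap_diff: "Dmap (a - b) = Dmap a - Dmap b"
  by (simp add: Dmap_def frag_extend_diff)
lemma Dmap_add: "Dmap (a + b) = Dmap a + Dmap b"
  by (simp add: Dmap_def frag_extend_add)
lemma lev_diff: "lev j (a - b) = lev j a - lev j b"
  by (simp add: lev_def frag_extend_diff)
lemma lev_add: "lev j (a + b) = lev j a + lev j b"
  by (simp add: lev_def frag_extend_add)
lemma aug_diff: "aug (a - b) = aug a - aug b"
  by (simp add: aug_def frag_extend_diff)
lemma aug_add: "aug (a + b) = aug a + aug b"
  by (simp add: aug_def frag_extend_add)

lemma aug_Dmap: "aug (Dmap g) = - Kp (aug g)"
proof -
  have a: "aug (Dmap g) = frag_extend (\<lambda>k. frag_of (fst k) - outs (fst k)) g"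
    by (simp add: Dmap_def aug_def frag_extend_frag_extend Dgen_def frag_extend_diff
        o_def outs_def)
  have b: "Kp (aug g) = frag_extend (\<lambda>k. outs (fst k) - frag_of (fst k)) g"
    by (simp add: Kp_def aug_def frag_extend_frag_extend)
  have "aug (Dmap g) + Kp (aug g) = 0"
    unfolding a b by (simp flip: frag_extend_fun_add add: frag_extend_zero_fun)
  then show ?thesis by (simp add: eq_neg_iff_add_eq_0)
qed

lemma Dmap_shiftT: "Dmap (shiftT g) = shiftT (Dmap g)"
  by (simp add: Dmap_def shiftT_def frag_extend_frag_extend Dgen_def frag_extend_diff
        o_def)

lemma Dmap_lev: "Dmap (lev j x) = lev j x - lev (j - 1) (Amap x)"
  by (simp add: Dmap_def lev_def Amap_def frag_extend_frag_extend Dgen_def frag_extend_diff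
        o_def outs_def flip: frag_extend_fun_diff)

lemma shift_lev0: "shiftT (lev 0 x) - lev 0 x = lev 0 (Kp x) + Dmap (lev 1 x)"
  by (simp add: shiftT_lev Dmap_lev Kp_eq lev_diff)

lemma lookup_Dgen:
  assumes "snd k \<le> snd k'"
  shows "Poly_Mapping.lookup (Dgen k) k' = (if k = k' then 1 else 0)"
proof -
  have "Poly_Mapping.lookup (\<Sum>e\<in>{e\<in>Ed. s e = fst k}. frag_of (r e, snd k - 1)) k' = 0"
    using assms by (auto simp: lookup_sum intro!: sum.neutral)
  then show ?thesis by (simp add: Dgen_def lookup_minus)
qed

lemma Dmap_inj: assumes "Dmap g = 0" shows "g = 0"
proof (rule ccontr)
  assume nz: "g \<noteq> 0"
  then have ne: "Poly_Mapping.keys g \<noteq> {}" by simp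
  define j where "j = Max (snd ` Poly_Mapping.keys g)"
  have "j \<in> snd ` Poly_Mapping.keys g" unfolding j_def using ne by (intro Max_in) auto
  then obtain w where wk: "(w, j) \<in> Poly_Mapping.keys g" by force
  have le: "snd i \<le> j" if "i \<in> Poly_Mapping.keys g" for i
    unfolding j_def using that by (intro Max_ge) auto
  have "Poly_Mapping.lookup (Dmap g) (w, j) =
      (\<Sum>i\<in>Poly_Mapping.keys g. if i = (w, j) then Poly_Mapping.lookup g i else 0)"
    unfolding Dmap_def lookup_frag_extend
    by (rule sum.cong) (auto simp: lookup_Dgen le)
  also have "\<dots> = Poly_Mapping.lookup g (w, j)" using wk by (simp add: sum.delta')
  finally have "Poly_Mapping.lookup g (w, j) = 0" using assms by simp
  then show False using wk by (simp add: in_keys_iff)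
qed

end

context gctx begin

abbreviation "G \<equiv> FG V"
abbreviation "N \<equiv> relsub V Ed r s"
abbreviation "Q \<equiv> K0gr V Ed r s"
abbreviation "rc y \<equiv> N #>\<^bsub>G\<^esub> y"

lemma G_comm: "comm_group G" by (simp add: FG_def abelian_free_Abelian_group)
lemma G_group: "group G" by (simp add: FG_def)
lemma carrier_G: "y \<in> carrier G \<longleftrightarrow> Poly_Mapping.keys y \<subseteq> V \<times> UNIV"
  by (simp add: FG_def)
lemma one_G [simp]: "\<one>\<^bsub>G\<^esub> = 0" by (simp add: FG_def)
lemma mult_G [simp]: "x \<otimes>\<^bsub>G\<^esub> y = x + y" by (simp add: FG_def)
lemma inv_G: "y \<in> carrier G \<Longrightarrow> inv\<^bsub>G\<^esub> y = - y" by (simp add: FG_def carrier_G)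

lemma RU_sub: "R \<times> UNIV \<subseteq> V \<times> UNIV" using R_sub by blast

lemma Dmap_hom: "Dmap \<in> hom (free_Abelian_group (R \<times> UNIV)) G"
proof (rule homI)
  fix x assume "x \<in> carrier (free_Abelian_group (R \<times> (UNIV::int set)))"
  then have "Poly_Mapping.keys x \<subseteq> V \<times> UNIV" using R_sub by auto
  then show "Dmap x \<in> carrier G" using keys_Dmap carrier_G by blast
qed (simp add: Dmap_add)

lemma imD_subgroup: "subgroup (Dmap ` carrier (free_Abelian_group (R \<times> UNIV))) G"
proof -
  interpret group_hom "free_Abelian_group (R \<times> (UNIV::int set))" G Dmap
    using Dmap_hom G_group by (simp add: group_hom_def group_hom_axioms_def)
  show ?thesis by (rule img_is_subgroup)
qed

lemma gens_eq: "{Poly_Mapping.single (v, i::int) (1::int) - (\<Sum>e\<in>{e\<in>Ed. s e = v}. Poly_Mapping.single (r e, i - 1) 1)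
        | v i. v \<in> R} = Dgen ` (R \<times> UNIV)"
proof (intro equalityI subsetI)
  fix y assume "y \<in> {Poly_Mapping.single (v, i::int) (1::int) - (\<Sum>e\<in>{e\<in>Ed. s e = v}. Poly_Mapping.single (r e, i - 1) 1)
        | v i. v \<in> R}"
  then obtain v i where "v \<in> R" "y = frag_of (v, i) - (\<Sum>e\<in>{e\<in>Ed. s e = v}. frag_of (r e, i - 1))"
    by blast
  then show "y \<in> Dgen ` (R \<times> UNIV)" by (intro image_eqI[of _ _ "(v,i)"]) (auto simp: Dgen_def)
next
  fix y assume "y \<in> Dgen ` (R \<times> UNIV)"
  then obtain v i where "v \<in> R" "y = Dgen (v,i)" by auto
  then show "y \<in> {Poly_Mapping.single (v, i::int) (1::int) - (\<Sum>e\<in>{e\<in>Ed. s e = v}. Poly_Mapping.single (r e, i - 1) 1)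
        | v i. v \<in> R}" unfolding Dgen_def by auto
qed

lemma gens_carrier: "Dgen ` (R \<times> UNIV) \<subseteq> carrier G"
proof
  fix y assume "y \<in> Dgen ` (R \<times> (UNIV::int set))"
  then obtain k where k: "k \<in> R \<times> UNIV" "y = Dgen k" by blast
  have "insert k (V \<times> UNIV) \<subseteq> V \<times> UNIV" using k R_sub by blast
  then have "Poly_Mapping.keys y \<subseteq> V \<times> UNIV" using keys_Dgen[of k] k by blast
  then show "y \<in> carrier G" by (simp add: carrier_G)
qed

lemma relsub_eq: "N = Dmap ` carrier (free_Abelian_group (R \<times> UNIV))"
proof
  show "N \<subseteq> Dmap ` carrier (free_Abelian_group (R \<times> UNIV))"
    unfolding relsub_def gens_eq
  proof (rule group.generate_subgroup_incl[OF G_group _ imD_subgroup])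
    show "Dgen ` (R \<times> UNIV) \<subseteq> Dmap ` carrier (free_Abelian_group (R \<times> UNIV))"
    proof
      fix y assume "y \<in> Dgen ` (R \<times> (UNIV::int set))"
      then obtain k where k: "k \<in> R \<times> UNIV" "y = Dgen k" by blast
      have "frag_of k \<in> carrier (free_Abelian_group (R \<times> UNIV))" using k(1) by simp
      moreover have "y = Dmap (frag_of k)" using k(2) by (simp add: Dmap_def)
      ultimately show "y \<in> Dmap ` carrier (free_Abelian_group (R \<times> UNIV))"
        by (rule rev_image_eqI)
    qed
  qed
next
  show "Dmap ` carrier (free_Abelian_group (R \<times> UNIV)) \<subseteq> N"
  proof
    fix y assume "y \<in> Dmap ` carrier (free_Abelian_group (R \<times> (UNIV::int set)))"
    then obtain g where g: "g \<in> carrier (free_Abelian_group (R \<times> (UNIV::int set)))" "y = Dmap g"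
      by (rule imageE)
    from g(1) have g1: "Poly_Mapping.keys g \<subseteq> R \<times> UNIV" by simp
    have "Dmap g \<in> N" using g1
    proof (induction g rule: free_Abelian_group_induct[consumes 1])
      have "\<one>\<^bsub>G\<^esub> \<in> N" unfolding relsub_def by (rule generate.one)
      then show "Dmap 0 \<in> N" by (simp add: Dmap_def)
    next
      fix a b
      assume ab: "Poly_Mapping.keys a \<subseteq> R \<times> UNIV" "Poly_Mapping.keys b \<subseteq> R \<times> UNIV" "Dmap a \<in> N" "Dmap b \<in> N"
      have "Poly_Mapping.keys b \<subseteq> V \<times> UNIV" using ab(2) RU_sub by (rule order_trans)
      then have "Dmap b \<in> carrier G" unfolding carrier_G by (rule keys_Dmap)
      then have "inv\<^bsub>G\<^esub> (Dmap b) \<in> N"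
        using group.generate_m_inv_closed[OF G_group gens_carrier] ab(4)
        unfolding relsub_def gens_eq by blast
      then have "Dmap a \<otimes>\<^bsub>G\<^esub> inv\<^bsub>G\<^esub> (Dmap b) \<in> N"
        using ab(3) unfolding relsub_def by (rule generate.eng[rotated])
      then show "Dmap (a - b) \<in> N"
        using \<open>Dmap b \<in> carrier G\<close> by (simp add: inv_G Dmap_diff)
    next
      fix k assume "k \<in> R \<times> (UNIV::int set)"
      then have "Dgen k \<in> Dgen ` (R \<times> UNIV)" by blast
      then have "Dgen k \<in> N" unfolding relsub_def gens_eq by (rule generate.incl)
      then show "Dmap (frag_of k) \<in> N" by (simp add: Dmap_def)
    qed
    then show "y \<in> N" using g by simp
  qed
qed

lemma N_subgroup: "subgroup N G"
  using imD_subgroup relsub_eq by simp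

lemma N_normal: "N \<lhd> G"
  using comm_group.subgroup_imp_normal[OF G_comm N_subgroup] .

lemma Q_comm: "comm_group Q"
  unfolding K0gr_def using comm_group.abelian_FactGroup[OF G_comm N_subgroup] .

lemma Q_group: "group Q" unfolding K0gr_def by (rule normal.factorgroup_is_group[OF N_normal])

lemma rc_carrier: "y \<in> carrier G \<Longrightarrow> rc y \<in> carrier Q"
  unfolding K0gr_def carrier_FactGroup by (rule imageI)

lemma carrier_Q: "m \<in> carrier Q \<Longrightarrow> \<exists>y\<in>carrier G. m = rc y"
  unfolding K0gr_def carrier_FactGroup by (erule imageE) blast

lemma rc_mult: "a \<in> carrier G \<Longrightarrow> b \<in> carrier G \<Longrightarrow> rc a \<otimes>\<^bsub>Q\<^esub> rc b = rc (a + b)"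
  using normal.rcos_sum[OF N_normal] by (simp add: K0gr_def)

lemma one_Q: "\<one>\<^bsub>Q\<^esub> = rc 0"
proof -
  have "rc 0 = N" using group.coset_mult_one[OF G_group, of N] N_subgroup
    by (simp add: subgroup.subset)
  then show ?thesis by (simp add: K0gr_def)
qed

lemma rc_inv: "a \<in> carrier G \<Longrightarrow> inv\<^bsub>Q\<^esub> (rc a) = rc (- a)"
proof -
  assume a: "a \<in> carrier G"
  then have na: "- a \<in> carrier G" by (simp add: carrier_G)
  show ?thesis
    using group.inv_equality[OF Q_group, of "rc (-a)" "rc a"] rc_mult[OF na a] rc_carrier[OF a] rc_carrier[OF na]
    by (simp add: one_Q)
qed

lemma rc_eq: "a \<in> carrier G \<Longrightarrow> b \<in> carrier G \<Longrightarrow> rc a = rc b \<longleftrightarrow> a - b \<in> N"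
proof -
  assume a: "a \<in> carrier G" and b: "b \<in> carrier G"
  have "a \<in> rc b \<longleftrightarrow> a \<otimes>\<^bsub>G\<^esub> inv\<^bsub>G\<^esub> b \<in> N"
    using subgroup.rcos_module[OF N_subgroup G_group b a] .
  also have "\<dots> \<longleftrightarrow> a - b \<in> N" using b by (simp add: inv_G)
  finally have *: "a \<in> rc b \<longleftrightarrow> a - b \<in> N" .
  show ?thesis
  proof
    assume "rc a = rc b"
    then show "a - b \<in> N"
      using * group.rcos_self[OF G_group a N_subgroup] by simp
  next
    assume "a - b \<in> N"
    then show "rc a = rc b"
      using * group.repr_independence[OF G_group _ b N_subgroup] by simp
  qed
qed

lemma rc_N: "n \<in> N \<Longrightarrow> a \<in> carrier G \<Longrightarrow> rc (a + n) = rc a"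
proof -
  assume n: "n \<in> N" and a: "a \<in> carrier G"
  have nc: "n \<in> carrier G" by (rule subgroup.mem_carrier[OF N_subgroup n])
  have an: "a + n \<in> carrier G" using a nc unfolding carrier_G using keys_add[of a n] by blast
  have "(a + n) - a \<in> N" using n by simp
  then show ?thesis using rc_eq[OF an a] by blast
qed

lemma lookup_outs: "v \<in> V \<Longrightarrow> Poly_Mapping.lookup (outs v) w = adj Ed r s v w"
proof -
  assume v: "v \<in> V"
  have fin: "finite {e\<in>Ed. s e = v}" using rf v by (simp add: row_finite_def)
  have "Poly_Mapping.lookup (outs v) w = (\<Sum>e\<in>{e\<in>Ed. s e = v}. if r e = w then 1 else 0)"
    by (simp add: outs_def lookup_sum eq_commute)
  also have "\<dots> = (\<Sum>e\<in>{e\<in>{e\<in>Ed. s e = v}. r e = w}. 1)"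
    using sum.inter_filter[OF fin, of "\<lambda>_. (1::int)" "\<lambda>e. r e = w"] by simp
  also have "\<dots> = int (card {e\<in>Ed. s e = v \<and> r e = w})"
    by (simp add: conj_assoc)
  finally show ?thesis by (simp add: adj_def)
qed

lemma Kmap_eq:
  assumes x: "x \<in> carrier (free_Abelian_group R)"
  shows "Kmap V Ed r s x = Kp x"
proof -
  have kx: "Poly_Mapping.keys x \<subseteq> R" using x by simp
  have kxV: "Poly_Mapping.keys x \<subseteq> V" using kx R_sub by blast
  have L: "Poly_Mapping.lookup (Kp x) w =
     (\<Sum>v\<in>Poly_Mapping.keys x. adj Ed r s v w * Poly_Mapping.lookup x v) - Poly_Mapping.lookup x w" for w
  proof -
    have "Poly_Mapping.lookup (Kp x) w = (\<Sum>v\<in>Poly_Mapping.keys x.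
        adj Ed r s v w * Poly_Mapping.lookup x v - (if v = w then Poly_Mapping.lookup x v else 0))"
      unfolding Kp_def lookup_frag_extend
      by (rule sum.cong) (use kxV in \<open>auto simp: lookup_minus lookup_outs algebra_simps\<close>)
    also have "\<dots> = (\<Sum>v\<in>Poly_Mapping.keys x. adj Ed r s v w * Poly_Mapping.lookup x v) - Poly_Mapping.lookup x w"
      by (simp add: sum_subtractf sum.delta' in_keys_iff)
    finally show ?thesis .
  qed
  have F: "(\<lambda>w. if w \<in> regV V Ed s then
       (\<Sum>v\<in>Poly_Mapping.keys x. adj Ed r s v w * Poly_Mapping.lookup x v) - Poly_Mapping.lookup x w
     else if w \<in> sinks V Ed s then
       (\<Sum>v\<in>Poly_Mapping.keys x. adj Ed r s v w * Poly_Mapping.lookup x v)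
     else 0) = Poly_Mapping.lookup (Kp x)"
  proof
    fix w
    show "(if w \<in> regV V Ed s then
       (\<Sum>v\<in>Poly_Mapping.keys x. adj Ed r s v w * Poly_Mapping.lookup x v) - Poly_Mapping.lookup x w
     else if w \<in> sinks V Ed s then
       (\<Sum>v\<in>Poly_Mapping.keys x. adj Ed r s v w * Poly_Mapping.lookup x v)
     else 0) = Poly_Mapping.lookup (Kp x) w"
    proof (cases "w \<in> V")
      case True
      show ?thesis
      proof (cases "w \<in> R")
        case True then show ?thesis by (simp add: L)
      next
        case False
        then have "Poly_Mapping.lookup x w = 0" using kx by (meson in_keys_iff subsetD)
        moreover have "w \<in> sinks V Ed s" using False \<open>w \<in> V\<close> by (simp add: sinks_def)
        ultimately show ?thesis using False by (simp add: L)
      qed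
    next
      case False
      then have "w \<notin> Poly_Mapping.keys (Kp x)" using keys_Kp[OF kxV] by blast
      then have "Poly_Mapping.lookup (Kp x) w = 0" by (simp add: in_keys_iff)
      moreover have "w \<notin> R" using False R_sub by blast
      moreover have "w \<notin> sinks V Ed s" using False by (simp add: sinks_def)
      ultimately show ?thesis by simp
    qed
  qed
  show ?thesis unfolding Kmap_def F by (simp add: lookup_inverse)
qed

lemma psi_eq: "psi V Ed r s x = rc (lev 0 x)"
  by (simp add: psi_def lev_def frag_extend_def frag_cmul_frag_of)

end

context gctx begin

lemma cG_add: "a \<in> carrier G \<Longrightarrow> b \<in> carrier G \<Longrightarrow> a + b \<in> carrier G"
  unfolding carrier_G using keys_add[of a b] by blast
lemma cG_uminus: "a \<in> carrier G \<Longrightarrow> - a \<in> carrier G"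
  unfolding carrier_G by simp
lemma cG_diff: "a \<in> carrier G \<Longrightarrow> b \<in> carrier G \<Longrightarrow> a - b \<in> carrier G"
  unfolding carrier_G using keys_diff[of a b] by blast
lemma cG_shiftT: "a \<in> carrier G \<Longrightarrow> shiftT a \<in> carrier G"
  unfolding carrier_G by (rule keys_shiftT)
lemma cG_lev: "Poly_Mapping.keys x \<subseteq> V \<Longrightarrow> lev j x \<in> carrier G"
  unfolding carrier_G by (rule keys_lev)
lemma cG_Dmap: "Poly_Mapping.keys g \<subseteq> R \<times> UNIV \<Longrightarrow> Dmap g \<in> carrier G"
  unfolding carrier_G by (rule keys_Dmap) (use RU_sub in blast)
lemma DN: "Poly_Mapping.keys g \<subseteq> R \<times> UNIV \<Longrightarrow> Dmap g \<in> N"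
  unfolding relsub_eq by simp
lemma N_D: "n \<in> N \<Longrightarrow> \<exists>g. Poly_Mapping.keys g \<subseteq> R \<times> UNIV \<and> n = Dmap g"
  unfolding relsub_eq by (erule imageE) (rule exI, rule conjI, simp, assumption)

lemma rc_diff: "a \<in> carrier G \<Longrightarrow> b \<in> carrier G \<Longrightarrow> rc a \<otimes>\<^bsub>Q\<^esub> inv\<^bsub>Q\<^esub> (rc b) = rc (a - b)"
  by (simp add: rc_inv rc_mult cG_uminus)

lemma aug_0 [simp]: "aug 0 = 0" by (simp add: aug_def)

lemma cls_eq: "cls V Ed r s v i = rc (frag_of (v, i))"
  by (simp add: cls_def)

lemma phi_formula:
  assumes phi_hom: "phi \<in> hom Q Q"
    and phi_gen: "\<forall>v\<in>V. \<forall>i::int. phi (cls V Ed r s v i) =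
        cls V Ed r s v (i + 1) \<otimes>\<^bsub>Q\<^esub> inv\<^bsub>Q\<^esub> (cls V Ed r s v i)"
    and y: "y \<in> carrier G"
  shows "phi (rc y) = rc (shiftT y - y)"
proof -
  interpret Qh: group_hom Q Q phi
    using Q_group phi_hom by (simp add: group_hom_def group_hom_axioms_def)
  have ky: "Poly_Mapping.keys y \<subseteq> V \<times> UNIV" using y carrier_G by blast
  then show ?thesis
  proof (induction y rule: free_Abelian_group_induct[consumes 1])
    have "phi (rc 0) = rc 0" using Qh.hom_one one_Q by simp
    then show "phi (rc 0) = rc (shiftT 0 - 0)" by simp
  next
    fix a b
    assume ab: "Poly_Mapping.keys a \<subseteq> V \<times> UNIV" "Poly_Mapping.keys b \<subseteq> V \<times> UNIV"
      "phi (rc a) = rc (shiftT a - a)" "phi (rc b) = rc (shiftT b - b)"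
    have a: "a \<in> carrier G" and b: "b \<in> carrier G" using ab carrier_G by auto
    have ta: "shiftT a - a \<in> carrier G" and tb: "shiftT b - b \<in> carrier G"
      using a b by (simp_all add: cG_diff cG_shiftT)
    have "phi (rc (a - b)) = phi (rc a \<otimes>\<^bsub>Q\<^esub> inv\<^bsub>Q\<^esub> (rc b))" by (simp add: rc_diff a b)
    also have "\<dots> = phi (rc a) \<otimes>\<^bsub>Q\<^esub> inv\<^bsub>Q\<^esub> (phi (rc b))"
      using a b rc_carrier by simp
    also have "\<dots> = rc ((shiftT a - a) - (shiftT b - b))"
      using ab(3,4) rc_diff[OF ta tb] by simp
    also have "(shiftT a - a) - (shiftT b - b) = shiftT (a - b) - (a - b)"
      by (simp add: shiftT_diff)
    finally show "phi (rc (a - b)) = rc (shiftT (a - b) - (a - b))" .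
  next
    fix k assume "k \<in> V \<times> (UNIV::int set)"
    then obtain v i where k: "k = (v, i)" "v \<in> V" by auto
    have c1: "frag_of (v, i + 1) \<in> carrier G" and c2: "frag_of (v, i) \<in> carrier G"
      using k(2) carrier_G by auto
    have "phi (rc (frag_of k)) = rc (frag_of (v, i + 1)) \<otimes>\<^bsub>Q\<^esub> inv\<^bsub>Q\<^esub> (rc (frag_of (v, i)))"
      using phi_gen k by (simp add: cls_eq)
    also have "\<dots> = rc (frag_of (v, i + 1) - frag_of (v, i))" by (rule rc_diff[OF c1 c2])
    finally show "phi (rc (frag_of k)) = rc (shiftT (frag_of k) - frag_of k)" using k by simp
  qed
qed

lemma part1:
  assumes phi_hom: "phi \<in> hom Q Q"
    and phi_gen: "\<forall>v\<in>V. \<forall>i::int. phi (cls V Ed r s v i) =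
        cls V Ed r s v (i + 1) \<otimes>\<^bsub>Q\<^esub> inv\<^bsub>Q\<^esub> (cls V Ed r s v i)"
    and x: "x \<in> carrier (free_Abelian_group R)"
  shows "phi (psi V Ed r s x) = psi V Ed r s (Kmap V Ed r s x)"
proof -
  have kx: "Poly_Mapping.keys x \<subseteq> R" using x by simp
  then have kxV: "Poly_Mapping.keys x \<subseteq> V" using R_sub by blast
  have l0: "lev 0 x \<in> carrier G" by (rule cG_lev[OF kxV])
  have lK: "lev 0 (Kp x) \<in> carrier G" by (rule cG_lev[OF keys_Kp[OF kxV]])
  have dn: "Dmap (lev 1 x) \<in> N" by (rule DN[OF keys_lev[OF kx]])
  have "phi (psi V Ed r s x) = rc (shiftT (lev 0 x) - lev 0 x)"
    by (simp add: psi_eq phi_formula[OF phi_hom phi_gen l0])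
  also have "\<dots> = rc (lev 0 (Kp x))" by (simp add: shift_lev0 rc_N[OF dn lK])
  also have "\<dots> = psi V Ed r s (Kmap V Ed r s x)" by (simp add: psi_eq Kmap_eq[OF x])
  finally show ?thesis .
qed

lemma inj_core:
  assumes kz: "Poly_Mapping.keys z \<subseteq> R" and Kz: "Kp z = 0" and zN: "lev 0 z \<in> N"
  shows "z = 0"
proof -
  obtain g where g: "Poly_Mapping.keys g \<subseteq> R \<times> UNIV" "lev 0 z = Dmap g" using N_D[OF zN] by blast
  have Az: "Amap z = z" using Kz by (simp add: Kp_eq)
  have D0: "Dmap (lev 0 z) = lev 0 z - lev (-1) z" using Dmap_lev[of 0 z] Az by simp
  have "Dmap (shiftT (g - lev 0 z)) = shiftT (Dmap g - Dmap (lev 0 z))"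
    by (simp add: Dmap_shiftT Dmap_diff)
  also have "\<dots> = shiftT (lev (-1) z)" using D0 g(2) by simp
  also have "\<dots> = Dmap g" using shiftT_lev[of "-1" z] g(2) by simp
  finally have "Dmap (shiftT (g - lev 0 z) - g) = 0" by (simp add: Dmap_diff)
  then have "shiftT (g - lev 0 z) - g = 0" by (rule Dmap_inj)
  then have "aug (shiftT (g - lev 0 z) - g) = 0" by simp
  then show "z = 0" by (simp add: aug_diff aug_shiftT aug_lev)
qed

end

context gctx begin

lemma part2:
  assumes phi_hom: "phi \<in> hom Q Q"
    and phi_gen: "\<forall>v\<in>V. \<forall>i::int. phi (cls V Ed r s v i) =
        cls V Ed r s v (i + 1) \<otimes>\<^bsub>Q\<^esub> inv\<^bsub>Q\<^esub> (cls V Ed r s v i)"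
  shows "psi V Ed r s \<in> iso
         ((free_Abelian_group R)\<lparr>carrier :=
            kernel (free_Abelian_group R) (free_Abelian_group V) (Kmap V Ed r s)\<rparr>)
         (Q\<lparr>carrier := kernel Q Q phi\<rparr>)"
proof -
  let ?K = "kernel (free_Abelian_group R) (free_Abelian_group V) (Kmap V Ed r s)"
  let ?L = "kernel Q Q phi"
  have memK: "x \<in> ?K \<longleftrightarrow> Poly_Mapping.keys x \<subseteq> R \<and> Kp x = 0" for x
  proof
    assume "x \<in> ?K"
    then show "Poly_Mapping.keys x \<subseteq> R \<and> Kp x = 0"
      using Kmap_eq[of x] by (simp add: kernel_def)
  next
    assume "Poly_Mapping.keys x \<subseteq> R \<and> Kp x = 0"
    then show "x \<in> ?K" using Kmap_eq[of x] by (simp add: kernel_def)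
  qed
  have memL: "m \<in> ?L \<longleftrightarrow> m \<in> carrier Q \<and> phi m = rc 0" for m
    by (simp add: kernel_def one_Q)
  have kV: "Poly_Mapping.keys x \<subseteq> R \<Longrightarrow> Poly_Mapping.keys x \<subseteq> V" for x :: "'v \<Rightarrow>\<^sub>0 int"
    using R_sub by blast
  have into: "psi V Ed r s x \<in> ?L" if x: "x \<in> ?K" for x
  proof -
    have kx: "Poly_Mapping.keys x \<subseteq> R" "Kp x = 0" using x memK by auto
    have xc: "x \<in> carrier (free_Abelian_group R)" using kx by simp
    have "phi (psi V Ed r s x) = psi V Ed r s (Kmap V Ed r s x)"
      by (rule part1[OF phi_hom phi_gen xc])
    also have "\<dots> = rc 0" using kx by (simp add: Kmap_eq[OF xc] psi_eq lev_def)
    finally show ?thesis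
      unfolding memL using psi_eq rc_carrier cG_lev kV kx(1) by simp
  qed
  have mult: "psi V Ed r s (x + y) = psi V Ed r s x \<otimes>\<^bsub>Q\<^esub> psi V Ed r s y"
    if "x \<in> ?K" "y \<in> ?K" for x y
  proof -
    have "Poly_Mapping.keys x \<subseteq> V" "Poly_Mapping.keys y \<subseteq> V" using that memK kV by auto
    then show ?thesis by (simp add: psi_eq lev_add rc_mult cG_lev)
  qed
  have inj: "inj_on (psi V Ed r s) ?K"
  proof (rule inj_onI)
    fix x x' assume x: "x \<in> ?K" and x': "x' \<in> ?K" and eq: "psi V Ed r s x = psi V Ed r s x'"
    have kx: "Poly_Mapping.keys x \<subseteq> R" "Kp x = 0" "Poly_Mapping.keys x' \<subseteq> R" "Kp x' = 0"
      using x x' memK by auto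
    have "lev 0 x - lev 0 x' \<in> N"
      using eq rc_eq[OF cG_lev[OF kV[OF kx(1)]] cG_lev[OF kV[OF kx(3)]]] by (simp add: psi_eq)
    then have zN: "lev 0 (x - x') \<in> N" by (simp add: lev_diff)
    have kz: "Poly_Mapping.keys (x - x') \<subseteq> R" using kx keys_diff[of x x'] by blast
    have "x - x' = 0" by (rule inj_core[OF kz _ zN]) (simp add: Kp_diff kx)
    then show "x = x'" by simp
  qed
  have surj: "?L \<subseteq> psi V Ed r s ` ?K"
  proof
    fix m assume m: "m \<in> ?L"
    then have mQ: "m \<in> carrier Q" and pm: "phi m = rc 0" using memL by auto
    obtain y where y: "y \<in> carrier G" "m = rc y" using carrier_Q[OF mQ] by blast
    have ty: "shiftT y - y \<in> carrier G" using y by (simp add: cG_diff cG_shiftT)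
    have z0: "(0 :: 'v \<times> int \<Rightarrow>\<^sub>0 int) \<in> carrier G" by (simp add: carrier_G)
    have "rc (shiftT y - y) = rc 0" using pm phi_formula[OF phi_hom phi_gen y(1)] y(2) by simp
    then have "shiftT y - y \<in> N" using rc_eq[OF ty z0] by simp
    then obtain g where g: "Poly_Mapping.keys g \<subseteq> R \<times> UNIV" "shiftT y - y = Dmap g"
      using N_D by blast
    define x where "x = aug g"
    have kx: "Poly_Mapping.keys x \<subseteq> R" unfolding x_def by (rule keys_aug[OF g(1)])
    have "- Kp x = aug (Dmap g)" by (simp add: aug_Dmap x_def)
    also have "\<dots> = 0" by (simp flip: g(2) add: aug_diff aug_shiftT)
    finally have Kx: "Kp x = 0" by simp
    have Ax: "Amap x = x" using Kx by (simp add: Kp_eq)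
    have D0: "Dmap (lev 0 x) = lev 0 x - lev (-1) x" using Dmap_lev[of 0 x] Ax by simp
    obtain q where q: "Poly_Mapping.keys q \<subseteq> R \<times> UNIV" "shiftT q - q = g - lev 0 (aug g)"
      using shiftT_antider[OF g(1)] by blast
    define z where "z = y - Dmap q - lev (-1) x"
    have "shiftT z - z = (shiftT y - y) - (Dmap (shiftT q) - Dmap q) - (lev 0 x - lev (-1) x)"
      by (simp add: z_def shiftT_diff Dmap_shiftT shiftT_lev)
    also have "\<dots> = Dmap g - Dmap (shiftT q - q) - Dmap (lev 0 x)"
      by (simp add: Dmap_diff D0 g(2))
    also have "\<dots> = Dmap (g - (shiftT q - q) - lev 0 x)" by (simp add: Dmap_diff)
    also have "\<dots> = 0" using q(2) by (simp add: Dmap_def x_def)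
    finally have "shiftT z = z" by simp
    then have "z = 0" by (rule shiftT_fix)
    then have yeq: "y = Dmap q + lev (-1) x" by (simp add: z_def algebra_simps)
    have "y - lev 0 x = Dmap (q - lev 0 x)" by (simp add: yeq Dmap_diff D0)
    moreover have "Poly_Mapping.keys (q - lev 0 x) \<subseteq> R \<times> UNIV"
      using q(1) keys_lev[OF kx, of 0] keys_diff[of q "lev 0 x"] by blast
    ultimately have "y - lev 0 x \<in> N" using DN by simp
    then have "rc y = rc (lev 0 x)" using rc_eq[OF y(1) cG_lev[OF kV[OF kx]]] by simp
    then have "m = psi V Ed r s x" using y(2) by (simp add: psi_eq)
    moreover have "x \<in> ?K" using kx Kx memK by simp
    ultimately show "m \<in> psi V Ed r s ` ?K" by blast
  qed
  have "psi V Ed r s ` ?K = ?L" using surj into by blast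
  then have bij: "bij_betw (psi V Ed r s) ?K ?L" using inj by (simp add: bij_betw_def)
  show ?thesis
    unfolding iso_def hom_def
    using into mult bij by (simp add: Pi_def FG_def)
qed

end

context gctx begin

lemma part3:
  assumes phi_hom: "phi \<in> hom Q Q"
    and phi_gen: "\<forall>v\<in>V. \<forall>i::int. phi (cls V Ed r s v i) =
        cls V Ed r s v (i + 1) \<otimes>\<^bsub>Q\<^esub> inv\<^bsub>Q\<^esub> (cls V Ed r s v i)"
  shows "\<exists>psibar. psibar \<in> iso
            (free_Abelian_group V Mod (Kmap V Ed r s ` carrier (free_Abelian_group R)))
            (Q Mod (phi ` carrier Q))
          \<and> (\<forall>y\<in>carrier (free_Abelian_group V).
               psibar ((Kmap V Ed r s ` carrier (free_Abelian_group R))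
                         #>\<^bsub>free_Abelian_group V\<^esub> y)
               = (phi ` carrier Q) #>\<^bsub>Q\<^esub> psi V Ed r s y)"
proof -
  let ?FR = "free_Abelian_group R"
  let ?FV = "free_Abelian_group V"
  define I where "I = Kmap V Ed r s ` carrier ?FR"
  define J where "J = phi ` carrier Q"
  interpret Qh: group_hom Q Q phi
    using Q_group phi_hom by (simp add: group_hom_def group_hom_axioms_def)
  interpret Qc: comm_group Q by (rule Q_comm)
  have kV: "Poly_Mapping.keys x \<subseteq> R \<Longrightarrow> Poly_Mapping.keys x \<subseteq> V" for x :: "'v \<Rightarrow>\<^sub>0 int"
    using R_sub by blast
  have I_eq: "I = Kp ` carrier ?FR"
    unfolding I_def by (rule image_cong) (simp_all add: Kmap_eq)
  have Kp_hom: "Kp \<in> hom ?FR ?FV"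
  proof (rule homI)
    fix x assume "x \<in> carrier ?FR"
    then show "Kp x \<in> carrier ?FV" using keys_Kp kV by simp
  qed (simp add: Kp_add)
  have FV_group: "group ?FV" by simp
  have FV_comm: "comm_group ?FV" by (rule abelian_free_Abelian_group)
  have I_sub: "subgroup I ?FV"
  proof -
    interpret Kh: group_hom ?FR ?FV Kp
      using Kp_hom by (simp add: group_hom_def group_hom_axioms_def)
    show ?thesis unfolding I_eq by (rule Kh.img_is_subgroup)
  qed
  have I_normal: "I \<lhd> ?FV" by (rule comm_group.subgroup_imp_normal[OF FV_comm I_sub])
  have J_sub: "subgroup J Q" unfolding J_def by (rule Qh.img_is_subgroup)
  have J_normal: "J \<lhd> Q" by (rule comm_group.subgroup_imp_normal[OF Q_comm J_sub])
  have psi_carrier: "psi V Ed r s y \<in> carrier Q" if "y \<in> carrier ?FV" for y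
    using that by (simp add: psi_eq rc_carrier cG_lev)
  have psi_add: "psi V Ed r s (y1 + y2) = psi V Ed r s y1 \<otimes>\<^bsub>Q\<^esub> psi V Ed r s y2"
    if "y1 \<in> carrier ?FV" "y2 \<in> carrier ?FV" for y1 y2
    using that by (simp add: psi_eq lev_add rc_mult cG_lev)
  have Jabsorb: "J #>\<^bsub>Q\<^esub> (j \<otimes>\<^bsub>Q\<^esub> p) = J #>\<^bsub>Q\<^esub> p"
    if j: "j \<in> J" and p: "p \<in> carrier Q" for j p
  proof -
    have jc: "j \<in> carrier Q" by (rule subgroup.mem_carrier[OF J_sub j])
    have a: "(J #>\<^bsub>Q\<^esub> j) #>\<^bsub>Q\<^esub> p = J #>\<^bsub>Q\<^esub> (j \<otimes>\<^bsub>Q\<^esub> p)"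
      by (rule group.coset_mult_assoc[OF Q_group subgroup.subset[OF J_sub] jc p])
    have b: "J #>\<^bsub>Q\<^esub> j = J" by (rule subgroup.rcos_const[OF J_sub Q_group j])
    show ?thesis using a unfolding b by (rule sym)
  qed
  have welldef: "J #>\<^bsub>Q\<^esub> psi V Ed r s y' = J #>\<^bsub>Q\<^esub> psi V Ed r s y"
    if y: "y \<in> carrier ?FV" and y': "y' \<in> I #>\<^bsub>?FV\<^esub> y" for y y'
  proof -
    obtain h where h: "h \<in> I" "y' = h + y" using y' unfolding r_coset_def by auto
    obtain x where x: "x \<in> carrier ?FR" "h = Kp x" using h(1) unfolding I_eq by blast
    have hc: "h \<in> carrier ?FV" using x keys_Kp kV by simp
    have "psi V Ed r s y' = psi V Ed r s h \<otimes>\<^bsub>Q\<^esub> psi V Ed r s y"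
      using h(2) psi_add[OF hc y] by simp
    moreover have "psi V Ed r s h = phi (psi V Ed r s x)"
      using part1[OF phi_hom phi_gen x(1)] Kmap_eq[OF x(1)] x(2) by simp
    moreover have "psi V Ed r s x \<in> carrier Q" using x(1) kV by (simp add: psi_carrier)
    ultimately show ?thesis
      using Jabsorb[of "phi (psi V Ed r s x)" "psi V Ed r s y"] psi_carrier[OF y]
      unfolding J_def by simp
  qed
  define psibar where "psibar C = J #>\<^bsub>Q\<^esub> psi V Ed r s (SOME y. y \<in> C)" for C
  have psibar_eq: "psibar (I #>\<^bsub>?FV\<^esub> y) = J #>\<^bsub>Q\<^esub> psi V Ed r s y"
    if y: "y \<in> carrier ?FV" for y
  proof -
    have "y \<in> I #>\<^bsub>?FV\<^esub> y" by (rule group.rcos_self[OF FV_group y I_sub])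
    then have "(SOME y'. y' \<in> I #>\<^bsub>?FV\<^esub> y) \<in> I #>\<^bsub>?FV\<^esub> y" by (rule someI)
    then show ?thesis unfolding psibar_def by (rule welldef[OF y])
  qed
  have carFV: "carrier (?FV Mod I) = (\<lambda>y. I #>\<^bsub>?FV\<^esub> y) ` carrier ?FV"
    by (rule carrier_FactGroup)
  have carQJ: "carrier (Q Mod J) = (\<lambda>m. J #>\<^bsub>Q\<^esub> m) ` carrier Q"
    by (rule carrier_FactGroup)
  have getC: "\<exists>y\<in>carrier ?FV. C = I #>\<^bsub>?FV\<^esub> y" if "C \<in> carrier (?FV Mod I)" for C
  proof -
    from that have "C \<in> (\<lambda>y. I #>\<^bsub>?FV\<^esub> y) ` carrier ?FV" by (simp only: carFV)
    then show ?thesis by (rule imageE) blast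
  qed
  have into: "psibar C \<in> carrier (Q Mod J)" if cC: "C \<in> carrier (?FV Mod I)" for C
  proof -
    obtain y where y: "y \<in> carrier ?FV" "C = I #>\<^bsub>?FV\<^esub> y" using getC[OF cC] by blast
    have e: "psibar C = J #>\<^bsub>Q\<^esub> psi V Ed r s y" using psibar_eq[OF y(1)] y(2) by simp
    have "J #>\<^bsub>Q\<^esub> psi V Ed r s y \<in> (\<lambda>m. J #>\<^bsub>Q\<^esub> m) ` carrier Q"
      by (rule imageI[OF psi_carrier[OF y(1)]])
    then show ?thesis unfolding e carQJ .
  qed
  have mult: "psibar (C1 \<otimes>\<^bsub>?FV Mod I\<^esub> C2) = psibar C1 \<otimes>\<^bsub>Q Mod J\<^esub> psibar C2"
    if cC1: "C1 \<in> carrier (?FV Mod I)" and cC2: "C2 \<in> carrier (?FV Mod I)" for C1 C2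
  proof -
    obtain y1 where y1: "y1 \<in> carrier ?FV" "C1 = I #>\<^bsub>?FV\<^esub> y1" using getC[OF cC1] by blast
    obtain y2 where y2: "y2 \<in> carrier ?FV" "C2 = I #>\<^bsub>?FV\<^esub> y2" using getC[OF cC2] by blast
    have y12: "y1 + y2 \<in> carrier ?FV"
      using y1(1) y2(1) keys_add[of y1 y2] by auto
    have "C1 \<otimes>\<^bsub>?FV Mod I\<^esub> C2 = I #>\<^bsub>?FV\<^esub> (y1 + y2)"
      using normal.rcos_sum[OF I_normal y1(1) y2(1)] y1(2) y2(2) by simp
    then have "psibar (C1 \<otimes>\<^bsub>?FV Mod I\<^esub> C2) = J #>\<^bsub>Q\<^esub> (psi V Ed r s y1 \<otimes>\<^bsub>Q\<^esub> psi V Ed r s y2)"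
      using psibar_eq[OF y12] psi_add[OF y1(1) y2(1)] by simp
    also have "\<dots> = (J #>\<^bsub>Q\<^esub> psi V Ed r s y1) <#>\<^bsub>Q\<^esub> (J #>\<^bsub>Q\<^esub> psi V Ed r s y2)"
      using normal.rcos_sum[OF J_normal psi_carrier[OF y1(1)] psi_carrier[OF y2(1)]] by simp
    also have "\<dots> = psibar C1 \<otimes>\<^bsub>Q Mod J\<^esub> psibar C2"
      using psibar_eq[OF y1(1)] psibar_eq[OF y2(1)] y1(2) y2(2) by simp
    finally show ?thesis .
  qed
  have inj: "inj_on psibar (carrier (?FV Mod I))"
  proof (rule inj_onI)
    fix C1 C2 assume c1: "C1 \<in> carrier (?FV Mod I)" and c2: "C2 \<in> carrier (?FV Mod I)"
      and eq: "psibar C1 = psibar C2"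
    obtain y1 where y1: "y1 \<in> carrier ?FV" "C1 = I #>\<^bsub>?FV\<^esub> y1" using getC[OF c1] by blast
    obtain y2 where y2: "y2 \<in> carrier ?FV" "C2 = I #>\<^bsub>?FV\<^esub> y2" using getC[OF c2] by blast
    have p1: "psi V Ed r s y1 \<in> carrier Q" and p2: "psi V Ed r s y2 \<in> carrier Q"
      using psi_carrier y1(1) y2(1) by auto
    have Jeq: "J #>\<^bsub>Q\<^esub> psi V Ed r s y1 = J #>\<^bsub>Q\<^esub> psi V Ed r s y2"
      using eq psibar_eq[OF y1(1)] psibar_eq[OF y2(1)] y1(2) y2(2) by simp
    have "psi V Ed r s y1 \<in> J #>\<^bsub>Q\<^esub> psi V Ed r s y2"
      using group.rcos_self[OF Q_group p1 J_sub] Jeq by simp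
    then have "psi V Ed r s y1 \<otimes>\<^bsub>Q\<^esub> inv\<^bsub>Q\<^esub> psi V Ed r s y2 \<in> J"
      by (rule subgroup.rcos_module_imp[OF J_sub Q_group p2])
    moreover have l1: "lev 0 y1 \<in> carrier G" and l2: "lev 0 y2 \<in> carrier G"
      using y1(1) y2(1) cG_lev by auto
    ultimately have "rc (lev 0 y1 - lev 0 y2) \<in> J"
      by (simp add: psi_eq rc_diff)
    then obtain m where m: "m \<in> carrier Q" "rc (lev 0 y1 - lev 0 y2) = phi m"
      unfolding J_def by blast
    obtain q where q: "q \<in> carrier G" "m = rc q" using carrier_Q[OF m(1)] by blast
    have ld: "lev 0 y1 - lev 0 y2 \<in> carrier G" using l1 l2 by (rule cG_diff)
    have tq: "shiftT q - q \<in> carrier G" using q(1) by (simp add: cG_diff cG_shiftT)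
    have "rc (lev 0 y1 - lev 0 y2) = rc (shiftT q - q)"
      using m(2) q(2) phi_formula[OF phi_hom phi_gen q(1)] by simp
    then have "(lev 0 y1 - lev 0 y2) - (shiftT q - q) \<in> N" using rc_eq[OF ld tq] by simp
    then obtain g where g: "Poly_Mapping.keys g \<subseteq> R \<times> UNIV"
        "(lev 0 y1 - lev 0 y2) - (shiftT q - q) = Dmap g" using N_D by blast
    have "y1 - y2 = aug ((lev 0 y1 - lev 0 y2) - (shiftT q - q))"
      by (simp add: aug_diff aug_lev aug_shiftT)
    also have "\<dots> = - Kp (aug g)" using g(2) by (simp add: aug_Dmap)
    also have "\<dots> = Kp (- aug g)" using Kp_diff[of 0 "aug g"] by (simp add: Kp_def)
    finally have yd: "y1 - y2 = Kp (- aug g)" .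
    have "- aug g \<in> carrier ?FR" using keys_aug[OF g(1)] by simp
    then have "y1 - y2 \<in> I" unfolding I_eq yd by blast
    then have "y1 \<otimes>\<^bsub>?FV\<^esub> inv\<^bsub>?FV\<^esub> y2 \<in> I" using y2(1) by simp
    then have "y1 \<in> I #>\<^bsub>?FV\<^esub> y2"
      by (rule subgroup.rcos_module_rev[OF I_sub FV_group y2(1) y1(1)])
    then have "I #>\<^bsub>?FV\<^esub> y2 = I #>\<^bsub>?FV\<^esub> y1"
      by (rule group.repr_independence[OF FV_group _ y2(1) I_sub])
    then show "C1 = C2" using y1(2) y2(2) by simp
  qed
  have surj: "carrier (Q Mod J) \<subseteq> psibar ` carrier (?FV Mod I)"
  proof
    fix M assume "M \<in> carrier (Q Mod J)"
    then have "M \<in> (\<lambda>m. J #>\<^bsub>Q\<^esub> m) ` carrier Q" by (simp only: carQJ)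
    then obtain m where m: "m \<in> carrier Q" "M = J #>\<^bsub>Q\<^esub> m" by (rule imageE) blast
    obtain y where y: "y \<in> carrier G" "m = rc y" using carrier_Q[OF m(1)] by blast
    have ky: "Poly_Mapping.keys y \<subseteq> V \<times> UNIV" using y(1) carrier_G by blast
    obtain q where q: "Poly_Mapping.keys q \<subseteq> V \<times> UNIV" "shiftT q - q = y - lev 0 (aug y)"
      using shiftT_antider[OF ky] by blast
    have qc: "q \<in> carrier G" using q(1) carrier_G by blast
    have ay: "aug y \<in> carrier ?FV" using keys_aug[OF ky] by simp
    have la: "lev 0 (aug y) \<in> carrier G" using ay cG_lev by simp
    have tq: "shiftT q - q \<in> carrier G" using qc by (simp add: cG_diff cG_shiftT)
    have "m = rc (lev 0 (aug y) + (shiftT q - q))" using y(2) q(2) by simp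
    also have "\<dots> = psi V Ed r s (aug y) \<otimes>\<^bsub>Q\<^esub> phi (rc q)"
      using rc_mult[OF la tq] phi_formula[OF phi_hom phi_gen qc] by (simp add: psi_eq)
    also have "\<dots> = phi (rc q) \<otimes>\<^bsub>Q\<^esub> psi V Ed r s (aug y)"
      by (rule Qc.m_comm[OF psi_carrier[OF ay] Qh.hom_closed[OF rc_carrier[OF qc]]])
    finally have "M = J #>\<^bsub>Q\<^esub> psi V Ed r s (aug y)"
      using m(2) Jabsorb[of "phi (rc q)" "psi V Ed r s (aug y)"] psi_carrier[OF ay] rc_carrier[OF qc]
      unfolding J_def by simp
    also have "\<dots> = psibar (I #>\<^bsub>?FV\<^esub> aug y)" by (rule psibar_eq[OF ay, symmetric])
    finally have Meq: "M = psibar (I #>\<^bsub>?FV\<^esub> aug y)" .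
    have "I #>\<^bsub>?FV\<^esub> aug y \<in> carrier (?FV Mod I)"
      unfolding carFV by (rule imageI[OF ay])
    then show "M \<in> psibar ` carrier (?FV Mod I)" unfolding Meq by (rule imageI)
  qed
  have "psibar ` carrier (?FV Mod I) = carrier (Q Mod J)" using into surj by blast
  then have "psibar \<in> iso (?FV Mod I) (Q Mod J)"
    unfolding iso_def hom_def bij_betw_def using into mult inj by auto
  moreover have "\<forall>y\<in>carrier ?FV. psibar (I #>\<^bsub>?FV\<^esub> y) = J #>\<^bsub>Q\<^esub> psi V Ed r s y"
    using psibar_eq by blast
  ultimately show ?thesis unfolding I_def J_def by blast
qed

end

theorem proposition4p4:
  fixes V :: "'v set" and Ed :: "'e set" and r s :: "'e \<Rightarrow> 'v"
    and phi :: "('v \<times> int \<Rightarrow>\<^sub>0 int) set \<Rightarrow> ('v \<times> int \<Rightarrow>\<^sub>0 int) set"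
  assumes "graph V Ed r s"
    and "row_finite V Ed s"
    and phi_hom: "phi \<in> hom (K0gr V Ed r s) (K0gr V Ed r s)"
    and phi_gen: "\<forall>v\<in>V. \<forall>i::int. phi (cls V Ed r s v i) =
        cls V Ed r s v (i + 1) \<otimes>\<^bsub>K0gr V Ed r s\<^esub> inv\<^bsub>K0gr V Ed r s\<^esub> (cls V Ed r s v i)"
  shows "(\<forall>x\<in>carrier (free_Abelian_group (regV V Ed s)).
            phi (psi V Ed r s x) = psi V Ed r s (Kmap V Ed r s x))
     \<and> psi V Ed r s \<in> iso
         ((free_Abelian_group (regV V Ed s))\<lparr>carrier :=
            kernel (free_Abelian_group (regV V Ed s)) (free_Abelian_group V) (Kmap V Ed r s)\<rparr>)
         ((K0gr V Ed r s)\<lparr>carrier := kernel (K0gr V Ed r s) (K0gr V Ed r s) phi\<rparr>)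
     \<and> (\<exists>psibar. psibar \<in> iso
            (free_Abelian_group V Mod (Kmap V Ed r s ` carrier (free_Abelian_group (regV V Ed s))))
            (K0gr V Ed r s Mod (phi ` carrier (K0gr V Ed r s)))
          \<and> (\<forall>y\<in>carrier (free_Abelian_group V).
               psibar ((Kmap V Ed r s ` carrier (free_Abelian_group (regV V Ed s)))
                         #>\<^bsub>free_Abelian_group V\<^esub> y)
               = (phi ` carrier (K0gr V Ed r s)) #>\<^bsub>K0gr V Ed r s\<^esub> psi V Ed r s y))"
proof -
  interpret gctx V Ed r s using assms(1,2) by unfold_locales
  have p1: "\<forall>x\<in>carrier (free_Abelian_group (regV V Ed s)).
            phi (psi V Ed r s x) = psi V Ed r s (Kmap V Ed r s x)"
    using part1[OF phi_hom phi_gen] by blast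
  show ?thesis
    using p1 part2[OF phi_hom phi_gen] part3[OF phi_hom phi_gen] by blast
qed

end
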